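(* For every integer $r\ge1$, for both choices of sign, and all real $x$, $$\operatorname{sech}^{2r+1}x=\frac{(\pm1)^{r+1}}{r\,(2r-1)!!}\Big(\frac{d}{d\sinh x}\Big)^{r+1}e^{\pm rx},$$ where $\frac{d}{d\sinh x}$ denotes differentiation with respect to the variable $u=\sinh x$ (i.e. $e^{\pm rx}$ is regarded as the function $(\sqrt{1+u^2}\pm u)^{r}$ of $u$, differentiated $r+1$ times in $u$, and then evaluated at $u=\sinh x$), and $(2r-1)!!=1\cdot3\cdots(2r-1)$. *)

theory Defs
  imports "HOL-Analysis.Analysis"
begin

definition oddfact :: "nat \<Rightarrow> nat" where
  "oddfact r = (\<Prod>k=1..r. 2 * k - 1)"

definition sech :: "real \<Rightarrow> real" where
  "sech x = 1 / cosh x"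

end

theory Submission
  imports Defs
begin

inductive sm :: "(real \<Rightarrow> real) \<Rightarrow> bool" where
  sm_const: "sm (\<lambda>u. a)"
| sm_id: "sm (\<lambda>u. u)"
| sm_sq: "sm (\<lambda>u. sqrt (1 + u\<^sup>2))"
| sm_isq: "sm (\<lambda>u. 1 / sqrt (1 + u\<^sup>2))"
| sm_add: "sm f \<Longrightarrow> sm g \<Longrightarrow> sm (\<lambda>u. f u + g u)"
| sm_mult: "sm f \<Longrightarrow> sm g \<Longrightarrow> sm (\<lambda>u. f u * g u)"

lemma sqpos: "sqrt (1 + u\<^sup>2) > (0::real)"
  by (simp add: add_pos_nonneg)

lemma d_sq: "((\<lambda>u. sqrt (1 + u\<^sup>2)) has_real_derivative u * (1 / sqrt (1 + u\<^sup>2))) (at u)"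
proof -
  have "((\<lambda>u. sqrt (1 + u\<^sup>2)) has_real_derivative inverse (sqrt (1 + u\<^sup>2)) / 2 * (0 + 2 * u)) (at u)"
    using sqpos[of u]
    by (auto intro!: derivative_eq_intros DERIV_real_sqrt simp: power2_eq_square)
  then show ?thesis by (simp add: field_simps)
qed

lemma d_isq: "((\<lambda>u. 1 / sqrt (1 + u\<^sup>2)) has_real_derivative
   (-1) * u * (1 / sqrt (1 + u\<^sup>2)) * (1 / sqrt (1 + u\<^sup>2)) * (1 / sqrt (1 + u\<^sup>2))) (at u)"
proof -
  have "((\<lambda>u. 1 / sqrt (1 + u\<^sup>2)) has_real_derivative
     - (u * (1 / sqrt (1 + u\<^sup>2))) / (sqrt (1 + u\<^sup>2))^2) (at u)"
    using sqpos[of u] d_sq[of u]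
    by (auto intro!: derivative_eq_intros simp: power2_eq_square inverse_eq_divide)
  then show ?thesis using sqpos[of u] by (simp add: field_simps power2_eq_square)
qed

lemma sm_deriv_ex: "sm f \<Longrightarrow> \<exists>f'. sm f' \<and> (\<forall>u. (f has_real_derivative f' u) (at u))"
proof (induction rule: sm.induct)
  case (sm_const a)
  then show ?case by (intro exI[of _ "\<lambda>u. 0"]) (auto intro: sm.intros)
next
  case sm_id
  then show ?case by (intro exI[of _ "\<lambda>u. 1"]) (auto intro: sm.intros)
next
  case sm_sq
  then show ?case using d_sq sm_mult[OF sm_id sm_isq]
    by (intro exI[of _ "\<lambda>u. u * (1 / sqrt (1 + u\<^sup>2))"]) blast
next
  case sm_isq
  have "sm (\<lambda>u. (-1) * u * (1 / sqrt (1 + u\<^sup>2)) * (1 / sqrt (1 + u\<^sup>2)) * (1 / sqrt (1 + u\<^sup>2)))"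
    by (intro sm.sm_mult sm.sm_isq sm.sm_id sm.sm_const)
  then show ?case using d_isq
    by (intro exI[of _ "\<lambda>u. (-1) * u * (1 / sqrt (1 + u\<^sup>2)) * (1 / sqrt (1 + u\<^sup>2)) * (1 / sqrt (1 + u\<^sup>2))"]) blast
next
  case (sm_add f g)
  then obtain f' g' where "sm f'" "sm g'" "\<forall>u. (f has_real_derivative f' u) (at u)"
    "\<forall>u. (g has_real_derivative g' u) (at u)" by blast
  then show ?case using sm_add.hyps by (intro exI[of _ "\<lambda>u. f' u + g' u"]) (auto intro!: sm.intros DERIV_add)
next
  case (sm_mult f g)
  then obtain f' g' where "sm f'" "sm g'" "\<forall>u. (f has_real_derivative f' u) (at u)"
    "\<forall>u. (g has_real_derivative g' u) (at u)" by blast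
  then show ?case using sm_mult.hyps by (intro exI[of _ "\<lambda>u. f' u * g u + g' u * f u"]) (auto intro!: sm.intros DERIV_mult)
qed

lemma sm_deriv: "sm f \<Longrightarrow> sm (deriv f) \<and> (\<forall>u. (f has_real_derivative deriv f u) (at u))"
proof -
  assume "sm f"
  then obtain f' where f': "sm f'" "\<forall>u. (f has_real_derivative f' u) (at u)" using sm_deriv_ex by blast
  then have "deriv f = f'" by (intro ext) (simp add: DERIV_imp_deriv)
  then show ?thesis using f' by simp
qed

lemma sm_funpow: "sm f \<Longrightarrow> sm ((deriv ^^ n) f)"
  by (induction n) (auto dest: sm_deriv)

lemma sm_pow: "sm f \<Longrightarrow> sm (\<lambda>u. f u ^ n)"
proof (induction n)
  case 0 then show ?case using sm_const[of 1] by simp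
next
  case (Suc n) then show ?case using sm_mult[of f "\<lambda>u. f u ^ n"] by simp
qed

lemma ring_id: "(c::real) * (F2 * (c * X) + real (2*r+1) * (q * X) * F1) = X * ((c*c) * F2 + (2*real r+1) * (c * q) * F1)"
  by (simp add: algebra_simps)

lemma divhelp: "F * X = a \<Longrightarrow> X > 0 \<Longrightarrow> F = a / (X::real)"
  by (simp add: field_simps)

lemma zero_deriv: "(\<And>u. h u = 0) \<Longrightarrow> (h has_real_derivative d) (at x) \<Longrightarrow> d = (0::real)"
proof -
  assume "\<And>u. h u = 0" and d: "(h has_real_derivative d) (at x)"
  then have "h = (\<lambda>_. 0)" by auto
  then have "(h has_real_derivative 0) (at x)" by simp
  then show ?thesis using d DERIV_unique by blast
qed

definition Fd :: "real \<Rightarrow> nat \<Rightarrow> nat \<Rightarrow> real \<Rightarrow> real" where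
  "Fd s r n = (deriv ^^ n) (\<lambda>u. (sqrt (1 + u\<^sup>2) + s * u) ^ r)"

lemma sm_f0: "sm (\<lambda>u. (sqrt (1 + u\<^sup>2) + s * u) ^ r)"
  by (intro sm_pow sm_add sm_sq sm_mult sm_const sm_id)

lemma DF: "((Fd s r n) has_real_derivative Fd s r (Suc n) u) (at u)"
proof -
  have "sm (Fd s r n)" unfolding Fd_def by (rule sm_funpow[OF sm_f0])
  then have "((Fd s r n) has_real_derivative deriv (Fd s r n) u) (at u)" using sm_deriv by blast
  then show ?thesis by (simp add: Fd_def)
qed

lemma F0: "Fd s r 0 u = (sqrt (1 + u\<^sup>2) + s * u) ^ r"
  by (simp add: Fd_def)

lemma F1: "Fd s r 1 u = real r * ((u * (1 / sqrt (1 + u\<^sup>2)) + s) * (sqrt (1 + u\<^sup>2) + s * u) ^ (r - Suc 0))"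
proof -
  have "((\<lambda>u. sqrt (1 + u\<^sup>2) + s * u) has_real_derivative u * (1 / sqrt (1 + u\<^sup>2)) + s * 1) (at u)"
    by (intro DERIV_add d_sq DERIV_cmult DERIV_ident)
  then have "((\<lambda>u. (sqrt (1 + u\<^sup>2) + s * u) ^ r) has_real_derivative
     real r * ((u * (1 / sqrt (1 + u\<^sup>2)) + s) * (sqrt (1 + u\<^sup>2) + s * u) ^ (r - Suc 0))) (at u)"
    using DERIV_power by fastforce
  then show ?thesis by (simp add: Fd_def DERIV_imp_deriv)
qed

context
  fixes r :: nat and s :: real
  assumes r1: "r \<ge> 1" and s2: "s * s = 1"
begin

lemma E0: "sqrt (1 + u\<^sup>2) * Fd s r 1 u = real r * s * Fd s r 0 u"
proof -
  define c where "c = sqrt (1 + u\<^sup>2)"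
  define w where "w = sqrt (1 + u\<^sup>2) + s * u"
  have c: "c > 0" unfolding c_def by (rule sqpos)
  have w: "w ^ r = w * w ^ (r - Suc 0)" using r1 by (cases r) auto
  have "c * (u * (1 / c) + s) = u + c * s"
    using c by (simp add: field_simps)
  also have "\<dots> = s * w" unfolding w_def c_def using s2 by (simp add: algebra_simps)
  finally have cw: "c * (u * (1 / c) + s) = s * w" .
  have "c * Fd s r 1 u = real r * (c * (u * (1 / c) + s)) * w ^ (r - Suc 0)"
    unfolding F1 c_def w_def by (simp only: mult_ac)
  also have "\<dots> = real r * s * (w * w ^ (r - Suc 0))" unfolding cw by (simp only: mult_ac)
  finally have "c * Fd s r 1 u = real r * s * (w * w ^ (r - Suc 0))" .
  then have "c * Fd s r 1 u = real r * s * w ^ r" by (simp only: w)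
  then show ?thesis unfolding F0 c_def w_def .
qed

lemma E1: "(1 + u\<^sup>2) * Fd s r 2 u + u * Fd s r 1 u - (real r)\<^sup>2 * Fd s r 0 u = 0"
proof -
  define c where "c = sqrt (1 + u\<^sup>2)"
  have DF1: "(Fd s r 1 has_real_derivative Fd s r 2 u) (at u)" using DF[of s r 1 u] by (simp add: numeral_2_eq_2)
  have DF0: "(Fd s r 0 has_real_derivative Fd s r 1 u) (at u)" using DF[of s r 0 u] by simp
  have d: "((\<lambda>u. sqrt (1 + u\<^sup>2) * Fd s r 1 u - real r * s * Fd s r 0 u) has_real_derivative
     (u * (1 / c) * Fd s r 1 u + Fd s r 2 u * c) - real r * s * Fd s r 1 u) (at u)"
    unfolding c_def by (intro DERIV_diff DERIV_mult d_sq DF1 DF0 DERIV_cmult)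
  have z: "u * (1 / c) * Fd s r 1 u + Fd s r 2 u * c - real r * s * Fd s r 1 u = 0"
    by (rule zero_deriv[OF _ d]) (simp only: E0 diff_self)
  have c: "c > 0" unfolding c_def by (rule sqpos)
  have cc: "c * c = 1 + u\<^sup>2" unfolding c_def by (simp add: add_nonneg_nonneg)
  have cu: "c * (u * (1 / c)) = u" using c by simp
  have "c * (u * (1 / c) * Fd s r 1 u + Fd s r 2 u * c - real r * s * Fd s r 1 u) = 0"
    using z by simp
  then have "u * Fd s r 1 u + (c * c) * Fd s r 2 u - real r * s * (c * Fd s r 1 u) = 0"
    using cu by algebra
  then have "u * Fd s r 1 u + (1 + u\<^sup>2) * Fd s r 2 u - real r * s * (real r * s * Fd s r 0 u) = 0"
    unfolding cc unfolding c_def E0 .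
  then show ?thesis using s2 by algebra
qed

lemma En: "(1 + u\<^sup>2) * Fd s r (n+2) u + (2*real n+1) * u * Fd s r (n+1) u
   + ((real n)\<^sup>2 - (real r)\<^sup>2) * Fd s r n u = 0"
proof (induction n arbitrary: u)
  case 0
  then show ?case using E1[of u] by (simp add: numeral_2_eq_2)
next
  case (Suc n)
  have D2: "(Fd s r (n+2) has_real_derivative Fd s r (Suc n + 2) u) (at u)" using DF[of s r "n+2" u] by simp
  have D1: "(Fd s r (n+1) has_real_derivative Fd s r (Suc n + 1) u) (at u)" using DF[of s r "n+1" u] by simp
  have D0: "(Fd s r n has_real_derivative Fd s r (Suc n) u) (at u)" using DF[of s r n u] by simp
  have P: "((\<lambda>u. 1 + u\<^sup>2) has_real_derivative 2 * u) (at u)"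
    by (auto intro!: derivative_eq_intros)
  have L: "((\<lambda>u. (2*real n+1) * u) has_real_derivative (2*real n+1)) (at u)"
    using DERIV_cmult[OF DERIV_ident, of "2*real n+1"] by simp
  have d: "((\<lambda>u. (1 + u\<^sup>2) * Fd s r (n+2) u + (2*real n+1) * u * Fd s r (n+1) u
   + ((real n)\<^sup>2 - (real r)\<^sup>2) * Fd s r n u) has_real_derivative
    ((2 * u) * Fd s r (n+2) u + Fd s r (Suc n + 2) u * (1 + u\<^sup>2))
    + ((2*real n+1) * Fd s r (n+1) u + Fd s r (Suc n + 1) u * ((2*real n+1) * u))
    + ((real n)\<^sup>2 - (real r)\<^sup>2) * Fd s r (Suc n) u) (at u)"
    by (intro DERIV_add DERIV_mult DERIV_cmult P L D2 D1 D0)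
  have z: "((2 * u) * Fd s r (n+2) u + Fd s r (Suc n + 2) u * (1 + u\<^sup>2))
    + ((2*real n+1) * Fd s r (n+1) u + Fd s r (Suc n + 1) u * ((2*real n+1) * u))
    + ((real n)\<^sup>2 - (real r)\<^sup>2) * Fd s r (Suc n) u = 0"
    by (rule zero_deriv[OF _ d]) (rule Suc.IH)
  have e1: "Fd s r (Suc n + 1) u = Fd s r (n+2) u" by simp
  have e2: "Fd s r (Suc n) u = Fd s r (n+1) u" by simp
  have rn: "real (Suc n) = real n + 1" by simp
  show ?case unfolding rn using z unfolding e1 e2 by algebra
qed

lemma Gconst: "Fd s r (r+1) u = Fd s r (r+1) 0 / sqrt (1 + u\<^sup>2) ^ (2*r+1)"
proof -
  define h where "h = (\<lambda>u. Fd s r (r+1) u * sqrt (1 + u\<^sup>2) ^ (2*r+1))"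
  have hd: "(h has_real_derivative 0) (at v)" for v
  proof -
    define c where "c = sqrt (1 + v\<^sup>2)"
    have c: "c > 0" unfolding c_def by (rule sqpos)
    have cc: "c * c = 1 + v\<^sup>2" unfolding c_def by (simp add: add_nonneg_nonneg)
    have cu: "c * (v * (1 / c)) = v" using c by simp
    have D1: "(Fd s r (r+1) has_real_derivative Fd s r (r+2) v) (at v)" using DF[of s r "r+1" v] by simp
    have d: "(h has_real_derivative
      Fd s r (r+2) v * c ^ (2*r+1) + real (2*r+1) * (v * (1 / c) * c ^ (2*r+1 - Suc 0)) * Fd s r (r+1) v) (at v)"
      unfolding h_def c_def by (intro DERIV_mult DERIV_power D1 d_sq)
    have p1: "c ^ (2*r+1) = c * c ^ (2*r)" by simp
    have p2: "(2*r+1 - Suc 0) = 2*r" by simp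
    have E: "(1 + v\<^sup>2) * Fd s r (r+2) v + (2*real r+1) * v * Fd s r (r+1) v = 0"
      using En[of v r] by simp
    have "c * (Fd s r (r+2) v * c ^ (2*r+1) + real (2*r+1) * (v * (1 / c) * c ^ (2*r+1 - Suc 0)) * Fd s r (r+1) v)
      = c ^ (2*r) * ((c * c) * Fd s r (r+2) v + (2*real r+1) * (c * (v * (1 / c))) * Fd s r (r+1) v)"
      unfolding p1 p2 by (rule ring_id)
    also have "\<dots> = c ^ (2*r) * ((1 + v\<^sup>2) * Fd s r (r+2) v + (2*real r+1) * v * Fd s r (r+1) v)"
      unfolding cc cu ..
    also have "\<dots> = 0" unfolding E by simp
    finally have "Fd s r (r+2) v * c ^ (2*r+1) + real (2*r+1) * (v * (1 / c) * c ^ (2*r+1 - Suc 0)) * Fd s r (r+1) v = 0"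
      using c by simp
    then show ?thesis using d by simp
  qed
  then have "h u = h 0" by (intro DERIV_isconst_all) auto
  then have "Fd s r (r+1) u * sqrt (1 + u\<^sup>2) ^ (2*r+1) = Fd s r (r+1) 0" unfolding h_def by simp
  moreover have "sqrt (1 + u\<^sup>2) ^ (2*r+1) > 0" using sqpos by simp
  ultimately show ?thesis by (rule divhelp)
qed

lemma arec: "Fd s r (n+2) 0 = ((real r)\<^sup>2 - (real n)\<^sup>2) * Fd s r n 0"
  using En[of 0 n] by (simp add: algebra_simps)

lemma a0: "Fd s r 0 0 = 1" by (simp add: F0)
lemma a1: "Fd s r 1 0 = real r * s" using F1[of s r 0] by simp

lemma desc: "2*i \<le> r+1 \<Longrightarrow> Fd s r (r+1) 0 =
   Fd s r (r+1-2*i) 0 * (\<Prod>t=1..i. (2*real t - 1) * (2*real r + 1 - 2*real t))"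
proof (induction i)
  case 0 then show ?case by simp
next
  case (Suc i)
  define n where "n = r + 1 - 2 * Suc i"
  have n2: "r + 1 - 2*i = n + 2" using Suc.prems unfolding n_def by simp
  have rn: "real n = real r - 1 - 2 * real i" using Suc.prems unfolding n_def by (simp add: of_nat_diff)
  have IH: "Fd s r (r+1) 0 = Fd s r (r+1-2*i) 0 * (\<Prod>t=1..i. (2*real t - 1) * (2*real r + 1 - 2*real t))"
    using Suc by simp
  have "Fd s r (r+1) 0 = Fd s r (n+2) 0 * (\<Prod>t=1..i. (2*real t - 1) * (2*real r + 1 - 2*real t))"
    using IH by (simp only: n2)
  also have "\<dots> = Fd s r n 0 * (((real r)\<^sup>2 - (real n)\<^sup>2) * (\<Prod>t=1..i. (2*real t - 1) * (2*real r + 1 - 2*real t)))"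
    unfolding arec by simp
  also have "((real r)\<^sup>2 - (real n)\<^sup>2) = (2*real (Suc i) - 1) * (2*real r + 1 - 2*real (Suc i))"
    unfolding rn by (simp add: algebra_simps power2_eq_square)
  finally show ?case unfolding n_def by (simp add: prod.cl_ivl_Suc mult_ac)
qed

lemma prod_rev: "i \<le> r \<Longrightarrow> (\<Prod>t=1..i. (2*real r + 1 - 2*real t)) = (\<Prod>t=r+1-i..r. (2*real t - 1))"
proof (induction i)
  case 0 then show ?case by simp
next
  case (Suc i)
  have "(\<Prod>t=r-i..r. (2*real t - 1)) = (2*real (r-i) - 1) * (\<Prod>t=Suc (r-i)..r. (2*real t - 1))"
    by (rule prod.atLeast_Suc_atMost) simp
  moreover have "Suc (r - i) = r + 1 - i" using Suc.prems by simp
  moreover have "r + 1 - Suc i = r - i" by simp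
  moreover have "real (r - i) = real r - real i" using Suc.prems by (simp add: of_nat_diff)
  ultimately show ?case using Suc by (simp add: prod.cl_ivl_Suc algebra_simps)
qed

lemma oddfact_real: "real (oddfact r) = (\<Prod>t=1..r. (2*real t - 1))"
  unfolding oddfact_def of_nat_prod by (rule prod.cong) (auto simp: of_nat_diff)

lemma aval: "Fd s r (r+1) 0 = s ^ (r+1) * real r * real (oddfact r)"
proof -
  define f where "f = (\<lambda>t::nat. 2*real t - 1)"
  have P: "(\<Prod>t=1..i. (2*real t - 1) * (2*real r + 1 - 2*real t)) = (\<Prod>t=1..i. f t) * (\<Prod>t=r+1-i..r. f t)"
    if "i \<le> r" for i
    unfolding prod.distrib prod_rev[OF that] f_def ..
  have of: "real (oddfact r) = (\<Prod>t=1..r. f t)" unfolding oddfact_real f_def ..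
  obtain i where "r = 2*i \<or> r = 2*i+1" by (metis dvd_mult_div_cancel oddE odd_even_add even_add)
  then show ?thesis
  proof
    assume r: "r = 2*i"
    then have i1: "i \<ge> 1" using r1 by simp
    have "Fd s r (r+1) 0 = Fd s r 1 0 * ((\<Prod>t=1..i. f t) * (\<Prod>t=i+1..i+i. f t))"
    proof -
      have a: "2*i \<le> r+1" "r+1-2*i = 1" "i \<le> r" "r+1-i = i+1" "r = i+i" using r by auto
      show ?thesis using desc[OF a(1)] P[OF a(3)] unfolding a(2) a(4) by (simp only: a(5))
    qed
    also have "(\<Prod>t=1..i. f t) * (\<Prod>t=i+1..i+i. f t) = (\<Prod>t=1..i+i. f t)"
      by (rule prod.ub_add_nat[symmetric]) simp
    also have "\<dots> = real (oddfact r)" unfolding of using r by (simp only: mult_2)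
    also have "s ^ (r+1) = s" unfolding r using s2 by (simp add: power_mult power2_eq_square)
    ultimately show ?thesis unfolding a1 by simp
  next
    assume r: "r = 2*i+1"
    have "Fd s r (r+1) 0 = Fd s r 0 0 * ((\<Prod>t=1..i+1. f t) * (\<Prod>t=i+1..(i+1)+i. f t))"
    proof -
      have a: "2*(i+1) \<le> r+1" "r+1-2*(i+1) = 0" "i+1 \<le> r" "r+1-(i+1) = i+1" "r = (i+1)+i" using r by auto
      show ?thesis using desc[OF a(1)] P[OF a(3)] unfolding a(2) a(4) by (simp only: a(5))
    qed
    also have "(\<Prod>t=i+1..(i+1)+i. f t) = f (i+1) * (\<Prod>t=i+2..(i+1)+i. f t)"
      by (subst prod.atLeast_Suc_atMost) simp_all
    also have "f (i+1) = real r" unfolding f_def r by simp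
    also have "(\<Prod>t=1..i+1. f t) * (real r * (\<Prod>t=i+2..(i+1)+i. f t)) = real r * ((\<Prod>t=1..i+1. f t) * (\<Prod>t=(i+1)+1..(i+1)+i. f t))"
      by (simp add: mult_ac)
    also have "(\<Prod>t=1..i+1. f t) * (\<Prod>t=(i+1)+1..(i+1)+i. f t) = (\<Prod>t=1..(i+1)+i. f t)"
      by (rule prod.ub_add_nat[symmetric]) simp
    also have "\<dots> = real (oddfact r)"
    proof -
      have "(i+1)+i = r" using r by simp
      then show ?thesis unfolding of by (simp only:)
    qed
    also have "s ^ (r+1) = 1" unfolding r using s2 by (simp add: power_mult power2_eq_square)
    ultimately show ?thesis unfolding a0 by simp
  qed
qed

end

theorem mainTheorem9:
  fixes r :: nat and s :: real and x :: real
  assumes "r \<ge> 1" and "s = 1 \<or> s = -1"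
  shows "sech x ^ (2*r+1) =
    s ^ (r+1) / (real r * real (oddfact r)) *
    (deriv ^^ (r+1)) (\<lambda>u. (sqrt (1 + u\<^sup>2) + s * u) ^ r) (sinh x)"
proof -
  have s2: "s * s = 1" using assms(2) by auto
  have ch: "sqrt (1 + (sinh x)\<^sup>2) = cosh x"
    by (rule real_sqrt_unique) (auto simp: cosh_square_eq)
  have of: "real (oddfact r) > 0" unfolding oddfact_def by (auto intro!: prod_pos)
  have rp: "real r > 0" using assms(1) by simp
  have ss: "s ^ (r+1) * s ^ (r+1) = 1" using s2 by (metis power_mult_distrib power_one)
  have "(deriv ^^ (r+1)) (\<lambda>u. (sqrt (1 + u\<^sup>2) + s * u) ^ r) (sinh x) = Fd s r (r+1) (sinh x)"
    by (simp add: Fd_def)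
  also have "\<dots> = s ^ (r+1) * real r * real (oddfact r) / cosh x ^ (2*r+1)"
    using Gconst[OF assms(1) s2, of "sinh x"] aval[OF assms(1) s2] ch by simp
  finally have e: "(deriv ^^ (r+1)) (\<lambda>u. (sqrt (1 + u\<^sup>2) + s * u) ^ r) (sinh x) =
     s ^ (r+1) * real r * real (oddfact r) / cosh x ^ (2*r+1)" .
  have "s ^ (r+1) / (real r * real (oddfact r)) * (s ^ (r+1) * real r * real (oddfact r) / cosh x ^ (2*r+1))
     = (s ^ (r+1) * s ^ (r+1)) / cosh x ^ (2*r+1)"
    using of rp by (simp add: field_simps)
  then show ?thesis unfolding e ss sech_def by (simp add: power_one_over)
qed

end
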